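(* If $R$ is a GSWNC ring, then its Jacobson radical $J(R)$ is nil.
   Context: All rings are associative with identity. An element $a$ of a ring is strongly weakly nil-clean if there exist an idempotent $e$ and a nilpotent $q$ with $eq = qe$ such that $a = q + e$ or $a = q - e$. A ring is GSWNC if every non-invertible element is strongly weakly nil-clean. *)

theory Defs
  imports Main
begin

definition ring_unit :: "'a::ring_1 \<Rightarrow> bool" where
  "ring_unit a \<longleftrightarrow> (\<exists>b. a * b = 1 \<and> b * a = 1)"

definition idem_elt :: "'a::ring_1 \<Rightarrow> bool" where
  "idem_elt e \<longleftrightarrow> e * e = e"

definition nilpotent_elt :: "'a::ring_1 \<Rightarrow> bool" where
  "nilpotent_elt q \<longleftrightarrow> (\<exists>n::nat. q ^ n = 0)"

definition strongly_weakly_nil_clean :: "'a::ring_1 \<Rightarrow> bool" where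
  "strongly_weakly_nil_clean a \<longleftrightarrow>
     (\<exists>e q. idem_elt e \<and> nilpotent_elt q \<and> e * q = q * e \<and> (a = q + e \<or> a = q - e))"

definition GSWNC :: "'a::ring_1 itself \<Rightarrow> bool" where
  "GSWNC (_ :: 'a itself) \<longleftrightarrow>
     (\<forall>a::'a. \<not> ring_unit a \<longrightarrow> strongly_weakly_nil_clean a)"

definition left_ideal :: "'a::ring_1 set \<Rightarrow> bool" where
  "left_ideal I \<longleftrightarrow> 0 \<in> I \<and> (\<forall>x\<in>I. \<forall>y\<in>I. x + y \<in> I) \<and> (\<forall>x\<in>I. - x \<in> I)
     \<and> (\<forall>r x. x \<in> I \<longrightarrow> r * x \<in> I)"

definition maximal_left_ideal :: "'a::ring_1 set \<Rightarrow> bool" where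
  "maximal_left_ideal M \<longleftrightarrow> left_ideal M \<and> M \<noteq> UNIV \<and>
     (\<forall>I. left_ideal I \<and> M \<subseteq> I \<longrightarrow> I = M \<or> I = UNIV)"

definition jacobson_radical :: "'a::ring_1 set" where
  "jacobson_radical = \<Inter> {M. maximal_left_ideal M}"

definition nil_set :: "'a::ring_1 set \<Rightarrow> bool" where
  "nil_set S \<longleftrightarrow> (\<forall>x\<in>S. nilpotent_elt x)"

end

theory Submission
  imports Defs
begin

lemma geo_left:
  fixes x :: "'a::ring_1"
  shows "(1 - x) * (\<Sum>i<n. x^i) = 1 - x^n"
proof (induction n)
  case (Suc n)
  have "(1 - x) * (\<Sum>i<Suc n. x^i) = (1 - x) * (\<Sum>i<n. x^i) + (1 - x) * x^n"
    by (simp add: distrib_left)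
  also have "\<dots> = 1 - x * x^n" using Suc by (simp add: algebra_simps)
  finally show ?case by simp
qed simp
lemma geo_right:
  fixes x :: "'a::ring_1"
  shows "(\<Sum>i<n. x^i) * (1 - x) = 1 - x^n"
proof (induction n)
  case (Suc n)
  have "(\<Sum>i<Suc n. x^i) * (1 - x) = (\<Sum>i<n. x^i) * (1 - x) + x^n * (1 - x)"
    by (simp add: distrib_right)
  also have "\<dots> = 1 - x^n * x" using Suc by (simp add: algebra_simps)
  finally show ?case by (simp add: power_commutes)
qed simp

lemma one_plus_nil_unit:
  fixes q :: "'a::ring_1"
  assumes "q ^ n = 0"
  shows "\<exists>w. (1 + q) * w = 1 \<and> w * (1 + q) = 1"
proof -
  have "(-q)^n = 0" using assms by (metis power_minus mult_zero_right)
  then have "(1 + q) * (\<Sum>i<n. (-q)^i) = 1 \<and> (\<Sum>i<n. (-q)^i) * (1 + q) = 1"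
    using geo_left[of "-q" n] geo_right[of "-q" n] by simp
  then show ?thesis by blast
qed

lemma left_ideal_jac: "left_ideal (jacobson_radical :: 'a::ring_1 set)"
  unfolding left_ideal_def jacobson_radical_def maximal_left_ideal_def
  by auto

lemma jac_left_inv:
  fixes x :: "'a::ring_1"
  assumes x: "x \<in> jacobson_radical"
  shows "\<exists>y. y * (1 - x) = 1"
proof (rule ccontr)
  assume nl: "\<not> (\<exists>y. y * (1 - x) = 1)"
  define L where "L = {r * (1 - x) | r. True}"
  define A where "A = {I. left_ideal I \<and> L \<subseteq> I \<and> (1::'a) \<notin> I}"
  have LA: "L \<in> A"
    unfolding A_def left_ideal_def
  proof (intro CollectI conjI ballI allI impI subset_refl)
    show "0 \<in> L" unfolding L_def by (rule CollectI, rule exI[of _ 0], simp)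
  next
    fix a b assume "a \<in> L" "b \<in> L"
    then obtain r s where "a = r * (1 - x)" "b = s * (1 - x)" unfolding L_def by blast
    then have "a + b = (r + s) * (1 - x)" by (simp add: distrib_right)
    then show "a + b \<in> L" unfolding L_def by blast
  next
    fix a assume "a \<in> L"
    then obtain r where "a = r * (1 - x)" unfolding L_def by blast
    then have "- a = (- r) * (1 - x)" by simp
    then show "- a \<in> L" unfolding L_def by blast
  next
    fix t a assume "a \<in> L"
    then obtain r where "a = r * (1 - x)" unfolding L_def by blast
    then have "t * a = (t * r) * (1 - x)" by (simp add: mult.assoc)
    then show "t * a \<in> L" unfolding L_def by blast
  next
    show "1 \<notin> L"
    proof
      assume "1 \<in> L"
      then obtain r where "1 = r * (1 - x)" unfolding L_def by blast
      then show False using nl by metis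
    qed
  qed
  have "\<forall>C\<in>chains A. \<exists>U\<in>A. \<forall>X\<in>C. X \<subseteq> U"
  proof
    fix C assume C: "C \<in> chains A"
    show "\<exists>U\<in>A. \<forall>X\<in>C. X \<subseteq> U"
    proof (cases "C = {}")
      case True then show ?thesis using LA by auto
    next
      case False
      have sub: "C \<subseteq> A" and ch: "\<forall>X\<in>C. \<forall>Y\<in>C. X \<subseteq> Y \<or> Y \<subseteq> X"
        using C unfolding chains_def chain_subset_def by auto
      have "\<Union>C \<in> A"
        unfolding A_def
      proof (intro CollectI conjI)
        show "left_ideal (\<Union>C)"
          unfolding left_ideal_def
        proof (intro conjI ballI allI impI)
          show "0 \<in> \<Union>C" using False sub unfolding A_def left_ideal_def by auto
        next
          fix a b assume "a \<in> \<Union>C" "b \<in> \<Union>C"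
          then obtain X Y where "X \<in> C" "Y \<in> C" "a \<in> X" "b \<in> Y" by auto
          then obtain Z where Z: "Z \<in> C" "a \<in> Z" "b \<in> Z" using ch by blast
          then have "left_ideal Z" using sub unfolding A_def by blast
          then have "a + b \<in> Z" using Z unfolding left_ideal_def by blast
          then show "a + b \<in> \<Union>C" using Z by blast
        next
          fix a assume "a \<in> \<Union>C"
          then show "- a \<in> \<Union>C" using sub unfolding A_def left_ideal_def by blast
        next
          fix r a assume "a \<in> \<Union>C"
          then show "r * a \<in> \<Union>C" using sub unfolding A_def left_ideal_def by blast
        qed
        show "L \<subseteq> \<Union>C" using False sub unfolding A_def by auto
        show "1 \<notin> \<Union>C" using sub unfolding A_def by auto
      qed
      then show ?thesis by auto
    qed
  qed
  from Zorn_Lemma2[OF this] obtain M where MA: "M \<in> A" and Mmax: "\<forall>X\<in>A. M \<subseteq> X \<longrightarrow> X = M"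
    by blast
  have "maximal_left_ideal M"
    unfolding maximal_left_ideal_def
  proof (intro conjI allI impI)
    show "left_ideal M" using MA unfolding A_def by auto
    show "M \<noteq> UNIV" using MA unfolding A_def by auto
    fix I assume I: "left_ideal I \<and> M \<subseteq> I"
    show "I = M \<or> I = UNIV"
    proof (cases "1 \<in> I")
      case True
      then have "\<forall>r. r * 1 \<in> I" using I unfolding left_ideal_def by blast
      then show ?thesis by auto
    next
      case False
      then have "I \<in> A" using I MA unfolding A_def by auto
      then show ?thesis using Mmax I by auto
    qed
  qed
  then have "x \<in> M" using x unfolding jacobson_radical_def by auto
  moreover have "1 - x \<in> L" unfolding L_def by (rule CollectI, rule exI[of _ 1], simp)
  then have "1 - x \<in> M" using MA unfolding A_def by blast
  ultimately have "x + (1 - x) \<in> M" using MA unfolding A_def left_ideal_def by blast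
  then show False using MA unfolding A_def by auto
qed

lemma jac_unit:
  fixes x :: "'a::ring_1"
  assumes x: "x \<in> jacobson_radical"
  shows "\<exists>y. y * (1 - x) = 1 \<and> (1 - x) * y = 1"
proof -
  obtain y where y: "y * (1 - x) = 1" using jac_left_inv[OF x] by blast
  have "- (y * x) \<in> jacobson_radical"
    using x left_ideal_jac unfolding left_ideal_def by blast
  then obtain z where z: "z * (1 - - (y * x)) = 1" using jac_left_inv by blast
  have yy: "y = 1 - - (y * x)" using y by (simp add: algebra_simps)
  have "z = z * (y * (1 - x))" using y by simp
  also have "\<dots> = (z * y) * (1 - x)" by (simp add: mult.assoc)
  also have "z * y = 1" using z yy by simp
  finally have "z = 1 - x" by simp
  then show ?thesis using z yy y by auto
qed

lemma jac_plus_case: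
  fixes a :: "'a::ring_1"
  assumes a: "a \<in> jacobson_radical" and e: "e * e = e" and q: "q ^ n = 0"
    and c: "e * q = q * e" and eq: "a = q + e"
  shows "nilpotent_elt a"
proof -
  obtain w where w1: "(1 + q) * w = 1" and w2: "w * (1 + q) = 1"
    using one_plus_nil_unit[OF q] by blast
  have ce: "(1 + q) * e = e * (1 + q)" using c by (simp add: algebra_simps)
  have we: "w * e = e * w"
  proof -
    have "w * e = w * e * ((1 + q) * w)" using w1 by simp
    also have "\<dots> = w * ((1 + q) * e) * w" using ce by (simp add: mult.assoc)
    also have "\<dots> = (w * (1 + q)) * e * w" by (simp add: mult.assoc)
    finally show ?thesis using w2 by simp
  qed
  have ea: "e * a = e * (1 + q)" using eq e by (simp add: algebra_simps)
  have "e = (w * (1 + q)) * e" using w2 by simp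
  also have "\<dots> = w * (e * (1 + q))" using ce by (simp add: mult.assoc)
  also have "\<dots> = (w * e) * a" using ea by (simp add: mult.assoc)
  finally have "e = (w * e) * a" .
  then have eJ: "e \<in> jacobson_radical"
    using a left_ideal_jac unfolding left_ideal_def by metis
  obtain y where y: "y * (1 - e) = 1" using jac_unit[OF eJ] by blast
  have "(1 - e) * e = 0" using e by (simp add: algebra_simps)
  then have "y * ((1 - e) * e) = 0" by simp
  then have "e = 0" using y by (simp add: mult.assoc[symmetric])
  then show ?thesis using eq q unfolding nilpotent_elt_def by auto
qed

theorem lemma2p10:
  assumes "GSWNC TYPE('a::ring_1)"
  shows "nil_set (jacobson_radical :: 'a set)"
  unfolding nil_set_def
proof
  fix x :: 'a assume x: "x \<in> jacobson_radical"
  show "nilpotent_elt x"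
  proof (cases "ring_unit x")
    case True
    then obtain b where b: "b * x = 1" unfolding ring_unit_def by blast
    have "b * x \<in> jacobson_radical" using x left_ideal_jac unfolding left_ideal_def by blast
    then have "(1::'a) \<in> jacobson_radical" using b by simp
    then obtain y where "y * (1 - 1) = (1::'a)" using jac_left_inv by blast
    then have "(1::'a) = 0" by simp
    then have "x ^ 1 = 0" by (metis mult_1 mult_zero_left power_one_right)
    then show ?thesis unfolding nilpotent_elt_def by blast
  next
    case False
    then obtain e q where e: "idem_elt e" and q: "nilpotent_elt q" and c: "e * q = q * e"
      and d: "x = q + e \<or> x = q - e"
      using assms unfolding GSWNC_def strongly_weakly_nil_clean_def by blast
    obtain n where qn: "q ^ n = 0" using q unfolding nilpotent_elt_def by blast
    show ?thesis
      using d
    proof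
      assume "x = q + e"
      then show ?thesis using jac_plus_case[OF x _ qn c] e unfolding idem_elt_def by blast
    next
      assume xe: "x = q - e"
      have mx: "- x \<in> jacobson_radical" using x left_ideal_jac unfolding left_ideal_def by blast
      have qn': "(-q) ^ n = 0" using qn by (metis power_minus mult_zero_right)
      have c': "e * (-q) = (-q) * e" using c by simp
      have "nilpotent_elt (- x)"
        using jac_plus_case[OF mx _ qn' c'] e xe unfolding idem_elt_def by simp
      then show ?thesis unfolding nilpotent_elt_def by (metis minus_minus power_minus mult_zero_right)
    qed
  qed
qed

end
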